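(* Let $\bar z$ be a feasible point of the MPCC $$\min f(z)\ \text{ s.t. }\ g(z)\le 0,\ h(z)=0,\ 0\le G(z)\perp H(z)\ge 0,$$ where $f:\mathbb{R}^n\to\mathbb{R}$, $g:\mathbb{R}^n\to\mathbb{R}^{n_g}$, $h:\mathbb{R}^n\to\mathbb{R}^{n_h}$, $G,H:\mathbb{R}^n\to\mathbb{R}^m$ are differentiable, and suppose MPCC-ACQ holds at $\bar z$. Then $\bar z$ is B-stationary if and only if $\bar z$ is piecewise M-stationary.
   Context: The complementarity constraint $0\le G(z)\perp H(z)\ge 0$ means $G(z)\ge0$, $H(z)\ge 0$, $G_i(z)H_i(z)=0$ for all $i$. At a feasible $\bar z$ define $I_g(\bar z)=\{i: g_i(\bar z)=0\}$, $I_h(\bar z)=\{1,\dots,n_h\}$, $\alpha(\bar z)=\{i: G_i(\bar z)=0<H_i(\bar z)\}$, $\gamma(\bar z)=\{i: G_i(\bar z)>0=H_i(\bar z)\}$, $\beta(\bar z)=\{i: G_i(\bar z)=0=H_i(\bar z)\}$. Let $\mathcal T(\bar z)$ be the (Bouligand) tangent cone of the MPCC feasible set at $\bar z$. $\bar z$ is B-stationary if $\nabla f(\bar z)^Td\ge 0$ for all $d\in\mathcal T(\bar z)$. The MPCC-linearized tangent cone is $\mathcal T^{\rm lin}_{\rm MPCC}(\bar z)=\{d:\ \nabla g_i(\bar z)^Td\le 0\ (i\in I_g(\bar z));\ \nabla h_i(\bar z)^Td=0\ (i\in I_h(\bar z));\ \nabla G_i(\bar z)^Td=0\ (i\in\alpha(\bar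 z));\ \nabla H_i(\bar z)^Td=0\ (i\in \gamma(\bar z));\ \nabla G_i(\bar z)^Td\ge0,\ \nabla H_i(\bar z)^Td\ge 0,\ (\nabla G_i(\bar z)^Td)(\nabla H_i(\bar z)^Td)=0\ (i\in\beta(\bar z))\}$. MPCC-ACQ holds at $\bar z$ if $\mathcal T(\bar z)=\mathcal T^{\rm lin}_{\rm MPCC}(\bar z)$. Piecewise M-stationarity: let $\mathcal P(\beta(\bar z))$ be the set of all pairs $(\beta_1,\beta_2)$ with $\beta_1\cup\beta_2=\beta(\bar z)$, $\beta_1\cap\beta_2=\emptyset$. $\bar z$ is piecewise M-stationary if for every $(\beta_1,\beta_2)\in\mathcal P(\beta(\bar z))$ there exist multipliers $\bar\lambda=(\bar\lambda^g,\bar\lambda^h,\bar\lambda^G,\bar\lambda^H)$ (possibly depending on the partition) with $$0=\nabla f(\bar z)+\sum_{i=1}^{n_g}\bar\lambda^g_i\nabla g_i(\bar z)+\sum_{i=1}^{n_h}\bar\lambda^h_i\nabla h_i(\bar z)-\sum_{i\in\alpha(\bar z)\cup\beta(\bar z)}\bar\lambda^G_i\nabla G_i(\bar z)-\sum_{i\in\gamma(\bar z)\cup\beta(\bar z)}\bar\lambda^H_i\nabla H_i(\bar z),$$ $\bar\lambda^g_i\ge0$ and $\bar\lambda^g_ig_i(\bar z)=0$ for all $i$; $\bar\lambda^H_i\ge 0$ for $i\in\beta_1$; $\bar\lambda^G_i\ge0$ for $i\in\beta_2$; and for every $i\in\beta(\bar z)$ either $\bar\lambda^G_i,\bar\lambda^H_i\ge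 0$ or $\bar\lambda^G_i\bar\lambda^H_i=0$. *)

theory Defs
  imports "HOL-Analysis.Analysis"
begin

text \<open>Indices are 0-based: constraints g_i for i < ng, h_i for i < nh,
  complementarity pairs G_i, H_i for i < m. R^n is an arbitrary euclidean space 'a.\<close>

definition grad :: "('a::euclidean_space \<Rightarrow> real) \<Rightarrow> 'a \<Rightarrow> 'a" where
  "grad f z = (\<Sum>b\<in>Basis. frechet_derivative f (at z) b *\<^sub>R b)"

definition mpcc_feasible ::
  "(nat \<Rightarrow> 'a \<Rightarrow> real) \<Rightarrow> (nat \<Rightarrow> 'a \<Rightarrow> real) \<Rightarrow> (nat \<Rightarrow> 'a \<Rightarrow> real) \<Rightarrow> (nat \<Rightarrow> 'a \<Rightarrow> real)
   \<Rightarrow> nat \<Rightarrow> nat \<Rightarrow> nat \<Rightarrow> 'a set" where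
  "mpcc_feasible g h G H ng nh m =
     {z. (\<forall>i<ng. g i z \<le> 0) \<and> (\<forall>i<nh. h i z = 0) \<and>
         (\<forall>i<m. G i z \<ge> 0 \<and> H i z \<ge> 0 \<and> G i z * H i z = 0)}"

definition tangent_cone :: "'a::real_normed_vector set \<Rightarrow> 'a \<Rightarrow> 'a set" where
  "tangent_cone S z = {d. \<exists>(t::nat \<Rightarrow> real) x. (\<forall>k. t k > 0) \<and> t \<longlonglongrightarrow> 0 \<and>
       (\<forall>k. x k \<in> S) \<and> (\<lambda>k. (1 / t k) *\<^sub>R (x k - z)) \<longlonglongrightarrow> d}"

definition I_g :: "(nat \<Rightarrow> 'a \<Rightarrow> real) \<Rightarrow> nat \<Rightarrow> 'a \<Rightarrow> nat set" where
  "I_g g ng z = {i. i < ng \<and> g i z = 0}"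

definition alpha_set :: "(nat \<Rightarrow> 'a \<Rightarrow> real) \<Rightarrow> (nat \<Rightarrow> 'a \<Rightarrow> real) \<Rightarrow> nat \<Rightarrow> 'a \<Rightarrow> nat set" where
  "alpha_set G H m z = {i. i < m \<and> G i z = 0 \<and> 0 < H i z}"

definition gamma_set :: "(nat \<Rightarrow> 'a \<Rightarrow> real) \<Rightarrow> (nat \<Rightarrow> 'a \<Rightarrow> real) \<Rightarrow> nat \<Rightarrow> 'a \<Rightarrow> nat set" where
  "gamma_set G H m z = {i. i < m \<and> G i z > 0 \<and> H i z = 0}"

definition beta_set :: "(nat \<Rightarrow> 'a \<Rightarrow> real) \<Rightarrow> (nat \<Rightarrow> 'a \<Rightarrow> real) \<Rightarrow> nat \<Rightarrow> 'a \<Rightarrow> nat set" where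
  "beta_set G H m z = {i. i < m \<and> G i z = 0 \<and> H i z = 0}"

definition B_stationary ::
  "('a::euclidean_space \<Rightarrow> real) \<Rightarrow> (nat \<Rightarrow> 'a \<Rightarrow> real) \<Rightarrow> (nat \<Rightarrow> 'a \<Rightarrow> real) \<Rightarrow> (nat \<Rightarrow> 'a \<Rightarrow> real)
   \<Rightarrow> (nat \<Rightarrow> 'a \<Rightarrow> real) \<Rightarrow> nat \<Rightarrow> nat \<Rightarrow> nat \<Rightarrow> 'a \<Rightarrow> bool" where
  "B_stationary f g h G H ng nh m z \<longleftrightarrow>
     (\<forall>d\<in>tangent_cone (mpcc_feasible g h G H ng nh m) z. grad f z \<bullet> d \<ge> 0)"

definition mpcc_lin_cone ::
  "(nat \<Rightarrow> 'a::euclidean_space \<Rightarrow> real) \<Rightarrow> (nat \<Rightarrow> 'a \<Rightarrow> real) \<Rightarrow> (nat \<Rightarrow> 'a \<Rightarrow> real)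
   \<Rightarrow> (nat \<Rightarrow> 'a \<Rightarrow> real) \<Rightarrow> nat \<Rightarrow> nat \<Rightarrow> nat \<Rightarrow> 'a \<Rightarrow> 'a set" where
  "mpcc_lin_cone g h G H ng nh m z =
     {d. (\<forall>i\<in>I_g g ng z. grad (g i) z \<bullet> d \<le> 0) \<and>
         (\<forall>i<nh. grad (h i) z \<bullet> d = 0) \<and>
         (\<forall>i\<in>alpha_set G H m z. grad (G i) z \<bullet> d = 0) \<and>
         (\<forall>i\<in>gamma_set G H m z. grad (H i) z \<bullet> d = 0) \<and>
         (\<forall>i\<in>beta_set G H m z. grad (G i) z \<bullet> d \<ge> 0 \<and> grad (H i) z \<bullet> d \<ge> 0 \<and>
              (grad (G i) z \<bullet> d) * (grad (H i) z \<bullet> d) = 0)}"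

definition MPCC_ACQ ::
  "(nat \<Rightarrow> 'a::euclidean_space \<Rightarrow> real) \<Rightarrow> (nat \<Rightarrow> 'a \<Rightarrow> real) \<Rightarrow> (nat \<Rightarrow> 'a \<Rightarrow> real)
   \<Rightarrow> (nat \<Rightarrow> 'a \<Rightarrow> real) \<Rightarrow> nat \<Rightarrow> nat \<Rightarrow> nat \<Rightarrow> 'a \<Rightarrow> bool" where
  "MPCC_ACQ g h G H ng nh m z \<longleftrightarrow>
     tangent_cone (mpcc_feasible g h G H ng nh m) z = mpcc_lin_cone g h G H ng nh m z"

definition piecewise_M_stationary ::
  "('a::euclidean_space \<Rightarrow> real) \<Rightarrow> (nat \<Rightarrow> 'a \<Rightarrow> real) \<Rightarrow> (nat \<Rightarrow> 'a \<Rightarrow> real) \<Rightarrow> (nat \<Rightarrow> 'a \<Rightarrow> real)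
   \<Rightarrow> (nat \<Rightarrow> 'a \<Rightarrow> real) \<Rightarrow> nat \<Rightarrow> nat \<Rightarrow> nat \<Rightarrow> 'a \<Rightarrow> bool" where
  "piecewise_M_stationary f g h G H ng nh m z \<longleftrightarrow>
     (\<forall>\<beta>1 \<beta>2. \<beta>1 \<union> \<beta>2 = beta_set G H m z \<and> \<beta>1 \<inter> \<beta>2 = {} \<longrightarrow>
        (\<exists>lg lh lG lH :: nat \<Rightarrow> real.
           0 = grad f z + (\<Sum>i<ng. lg i *\<^sub>R grad (g i) z) + (\<Sum>i<nh. lh i *\<^sub>R grad (h i) z)
               - (\<Sum>i\<in>alpha_set G H m z \<union> beta_set G H m z. lG i *\<^sub>R grad (G i) z)
               - (\<Sum>i\<in>gamma_set G H m z \<union> beta_set G H m z. lH i *\<^sub>R grad (H i) z) \<and>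
           (\<forall>i<ng. lg i \<ge> 0 \<and> lg i * g i z = 0) \<and>
           (\<forall>i\<in>\<beta>1. lH i \<ge> 0) \<and> (\<forall>i\<in>\<beta>2. lG i \<ge> 0) \<and>
           (\<forall>i\<in>beta_set G H m z. (lG i \<ge> 0 \<and> lH i \<ge> 0) \<or> lG i * lH i = 0)))"

end

theory Submission
  imports Defs "HOL-Homology.Brouwer_Degree"
begin


lemma sumsq_pos_nat:
  fixes z :: "nat \<Rightarrow> real"
  assumes "i \<le> n" "z i \<noteq> 0"
  shows "(\<Sum>j\<le>n. (z j)^2) > 0"
proof -
  have "(\<Sum>j\<le>n. (z j)^2) \<ge> (z i)^2"
    using assms by (intro member_le_sum) auto
  moreover have "(z i)^2 > 0" using assms by simp
  ultimately show ?thesis by linarith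
qed

lemma cm_comp:
  assumes "continuous_map X (powertop_real UNIV) f"
  shows "continuous_map X euclideanreal (\<lambda>x. f x j)"
  using assms by (simp add: continuous_map_componentwise_UNIV)

lemma big_coord:
  fixes y :: "nat \<Rightarrow> real"
  assumes "(\<Sum>i\<le>n. (y i)^2) = 1"
  shows "\<exists>i\<le>n. 1 \<le> real (Suc n) * \<bar>y i\<bar>"
proof (rule ccontr)
  assume "\<not> ?thesis"
  then have lt: "\<forall>i\<le>n. \<bar>y i\<bar> < 1 / real (Suc n)" by (auto simp: field_simps)
  have "(y i)^2 < (1 / real (Suc n))^2" if "i \<le> n" for i
    using lt that by (metis abs_ge_zero abs_power2 power_strict_mono power2_abs zero_less_numeral order.strict_trans1 pos2)
  then have "(\<Sum>i\<le>n. (y i)^2) < (\<Sum>i\<le>n. (1 / real (Suc n))^2)"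
    by (intro sum_strict_mono) auto
  also have "\<dots> = 1 / real (Suc n)" by (simp add: power2_eq_square)
  also have "\<dots> \<le> 1" by simp
  finally show False using assms by simp
qed

lemma PM_aux:
  fixes G :: "(nat \<Rightarrow> real) \<Rightarrow> nat \<Rightarrow> real" and n :: nat
  assumes cont: "\<And>i. i \<le> n \<Longrightarrow> continuous_map (powertop_real UNIV) euclideanreal (\<lambda>t. G t i)"
  and lo: "\<And>t i. (\<forall>j\<le>n. -1 \<le> t j \<and> t j \<le> 1) \<Longrightarrow> i \<le> n \<Longrightarrow> t i = -1 \<Longrightarrow> G t i \<le> 0"
  and hi: "\<And>t i. (\<forall>j\<le>n. -1 \<le> t j \<and> t j \<le> 1) \<Longrightarrow> i \<le> n \<Longrightarrow> t i = 1 \<Longrightarrow> G t i \<ge> 0"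
  shows "\<exists>t. (\<forall>j\<le>n. -1 \<le> t j \<and> t j \<le> 1) \<and> (\<forall>i\<le>n. G t i = 0)"
proof (rule ccontr)
  assume nz0: "\<not> ?thesis"
  define k where "k = Suc n"
  define cl where "cl x = max (-1) (min 1 x)" for x::real
  define \<tau> where "\<tau> y = (\<lambda>j. cl (real k * y j))" for y :: "nat \<Rightarrow> real"
  have cube: "\<forall>j\<le>n. -1 \<le> \<tau> y j \<and> \<tau> y j \<le> 1" for y
    by (auto simp: \<tau>_def cl_def)
  have nzK: "\<exists>i\<le>n. G (\<tau> y) i \<noteq> 0" for y using nz0 cube by blast
  define K where "K y = (\<lambda>i. if i \<le> n then G (\<tau> y) i else 0)" for y
  define N where "N z = (\<lambda>i. if i \<le> n then z i / sqrt (\<Sum>j\<le>n. (z j)^2) else 0)" for z :: "nat\<Rightarrow>real"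
  define S where "S = {x::nat\<Rightarrow>real. (\<Sum>i\<le>n. (x i)^2) = 1 \<and> (\<forall>i>n. x i = 0)}"
  have nsph: "nsphere n = subtopology (powertop_real UNIV) S"
    by (simp add: nsphere S_def)
  have Nsph: "N z \<in> S" if "\<exists>i\<le>n. z i \<noteq> 0" for z
  proof -
    have pos: "(\<Sum>j\<le>n. (z j)^2) > 0" using that sumsq_pos_nat by blast
    have "(\<Sum>i\<le>n. (N z i)^2) = (\<Sum>i\<le>n. (z i)^2 / (\<Sum>j\<le>n. (z j)^2))"
      using pos by (intro sum.cong) (auto simp: N_def power_divide)
    also have "\<dots> = 1" using pos by (simp add: sum_divide_distrib[symmetric])
    finally show ?thesis by (auto simp: S_def N_def)
  qed
  have contN: "continuous_map X (nsphere n) (\<lambda>x. N (f x))"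
    if cf: "\<And>i. i \<le> n \<Longrightarrow> continuous_map X euclideanreal (\<lambda>x. f x i)"
      and nzf: "\<And>x. x \<in> topspace X \<Longrightarrow> \<exists>i\<le>n. f x i \<noteq> 0" for X f
  proof -
    have "continuous_map X euclideanreal (\<lambda>x. N (f x) i)" for i
    proof (cases "i \<le> n")
      case True
      have c1: "continuous_map X euclideanreal (\<lambda>x. (\<Sum>j\<le>n. (f x j)^2))"
        by (intro continuous_map_sum continuous_map_real_pow cf) auto
      have "continuous_map X euclideanreal (\<lambda>x. f x i / sqrt (\<Sum>j\<le>n. (f x j)^2))"
      proof (rule continuous_map_real_divide)
        show "continuous_map X euclideanreal (\<lambda>x. f x i)" by (rule cf[OF True])
        show "continuous_map X euclideanreal (\<lambda>x. sqrt (\<Sum>j\<le>n. (f x j)^2))"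
          by (rule continuous_map_sqrt[OF c1])
        show "sqrt (\<Sum>j\<le>n. (f x j)^2) \<noteq> 0" if "x \<in> topspace X" for x
          using nzf[OF that] sumsq_pos_nat by (metis less_irrefl real_sqrt_eq_zero_cancel_iff)
      qed
      then show ?thesis using True by (simp add: N_def)
    next
      case False
      then show ?thesis by (simp add: N_def)
    qed
    then show ?thesis
      unfolding nsph continuous_map_in_subtopology
      using Nsph nzf by (auto simp: continuous_map_componentwise_UNIV)
  qed
  have contG: "continuous_map X euclideanreal (\<lambda>x. G (\<tau> (f x)) i)"
    if cf: "\<And>j. continuous_map X euclideanreal (\<lambda>x. f x j)" and i: "i \<le> n" for X f i
  proof -
    have "continuous_map X (powertop_real UNIV) (\<lambda>x. \<tau> (f x))"
    proof -
      have cc: "continuous_map euclideanreal euclideanreal cl"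
        unfolding cl_def by (simp add: continuous_intros)
      have "continuous_map X euclideanreal (\<lambda>x. cl (real k * f x j))" for j
        using continuous_map_compose[OF continuous_map_real_mult[OF continuous_map_canonical_const cf] cc]
        by (simp add: o_def)
      then show ?thesis by (simp add: continuous_map_componentwise_UNIV \<tau>_def)
    qed
    from continuous_map_compose[OF this cont[OF i]] show ?thesis by (simp add: o_def)
  qed
  have projS: "continuous_map (nsphere n) euclideanreal (\<lambda>x. x j)" for j
    by (rule continuous_map_nsphere_projection)
  let ?X = "prod_topology (top_of_set {0..1::real}) (nsphere n)"
  have csnd: "continuous_map ?X euclideanreal (\<lambda>x. snd x j)" for j
    using continuous_map_compose[OF continuous_map_snd projS] by (simp add: o_def)
  have cfst: "continuous_map ?X euclideanreal fst"
    using continuous_map_fst[of "top_of_set {0..1::real}" "nsphere n"] continuous_map_into_fulltopology by blast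
  define H1 where "H1 x = N (\<lambda>i. (1 - fst x) * snd x i + fst x * K (snd x) i)" for x :: "real \<times> (nat \<Rightarrow> real)"
  have h1: "homotopic_with (\<lambda>x. True) (nsphere n) (nsphere n) id (\<lambda>y. N (K y))"
  proof (subst homotopic_with, simp, intro exI conjI)
    show "continuous_map ?X (nsphere n) H1"
      unfolding H1_def
    proof (rule contN)
      show "continuous_map ?X euclideanreal (\<lambda>x. (1 - fst x) * snd x i + fst x * K (snd x) i)" if "i \<le> n" for i
      proof -
        have "continuous_map ?X euclideanreal (\<lambda>x. G (\<tau> (snd x)) i)"
          by (rule contG[OF csnd that])
        then have "continuous_map ?X euclideanreal (\<lambda>x. (1 - fst x) * snd x i + fst x * G (\<tau> (snd x)) i)"
          by (intro continuous_map_add continuous_map_real_mult continuous_map_diff continuous_map_canonical_const cfst csnd)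
        then show ?thesis using that by (simp add: K_def)
      qed
      show "\<exists>i\<le>n. (1 - fst x) * snd x i + fst x * K (snd x) i \<noteq> 0" if "x \<in> topspace ?X" for x
      proof -
        obtain s y where x: "x = (s, y)" by (cases x)
        have s: "0 \<le> s" "s \<le> 1" and yS: "y \<in> S" using that by (auto simp: x nsph)
        show ?thesis
        proof (cases "s = 1")
          case True
          then show ?thesis using nzK[of y] by (auto simp: x K_def)
        next
          case False
          with s have s1: "s < 1" by simp
          obtain i where i: "i \<le> n" "1 \<le> real (Suc n) * \<bar>y i\<bar>"
            using big_coord[of y n] yS unfolding S_def by blast
          show ?thesis
          proof (cases "y i > 0")
            case True
            then have "\<tau> y i = 1" using i by (auto simp: \<tau>_def cl_def k_def)
            then have "G (\<tau> y) i \<ge> 0" using hi[OF cube i(1)] by blast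
            moreover have "(1 - s) * y i > 0" using s1 True by simp
            ultimately have "(1 - s) * y i + s * K y i > 0" using s i(1)
              by (simp add: K_def add_pos_nonneg)
            then show ?thesis using i(1) by (auto simp: x)
          next
            case False
            then have yneg: "y i < 0" using i by (cases "y i = 0") auto
            then have "\<tau> y i = -1" using i by (auto simp: \<tau>_def cl_def k_def)
            then have "G (\<tau> y) i \<le> 0" using lo[OF cube i(1)] by blast
            moreover have "(1 - s) * y i < 0" using s1 yneg by (simp add: mult_pos_neg)
            ultimately have "(1 - s) * y i + s * K y i < 0" using s i(1)
              by (simp add: K_def add_neg_nonpos mult_nonneg_nonpos)
            then show ?thesis using i(1) by (auto simp: x)
          qed
        qed
      qed
    qed
    show "\<forall>x\<in>topspace (nsphere n). H1 (0, x) = id x"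
    proof
      fix x assume "x \<in> topspace (nsphere n)"
      then have "x \<in> S" by (simp add: nsph)
      then show "H1 (0, x) = id x"
        by (auto simp: H1_def N_def S_def fun_eq_iff)
    qed
    show "\<forall>t\<in>{0..1}. True" by simp
    show "\<forall>x\<in>topspace (nsphere n). H1 (1, x) = N (K x)"
      by (simp add: H1_def)
  qed
  define H2 where "H2 x = N (K (\<lambda>j. (1 - fst x) * snd x j))" for x :: "real \<times> (nat \<Rightarrow> real)"
  have h2: "homotopic_with (\<lambda>x. True) (nsphere n) (nsphere n) (\<lambda>y. N (K y)) (\<lambda>y. N (K (\<lambda>j. 0)))"
  proof (subst homotopic_with, simp, intro exI conjI)
    show "continuous_map ?X (nsphere n) H2"
      unfolding H2_def
    proof (rule contN)
      show "continuous_map ?X euclideanreal (\<lambda>x. K (\<lambda>j. (1 - fst x) * snd x j) i)" if "i \<le> n" for i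
      proof -
        have "continuous_map ?X euclideanreal (\<lambda>x. (1 - fst x) * snd x j)" for j
          by (intro continuous_map_real_mult continuous_map_diff continuous_map_canonical_const cfst csnd)
        from contG[OF this that] show ?thesis using that by (simp add: K_def)
      qed
      show "\<exists>i\<le>n. K (\<lambda>j. (1 - fst x) * snd x j) i \<noteq> 0" for x
        using nzK by (auto simp: K_def)
    qed
    show "\<forall>x\<in>topspace (nsphere n). H2 (0, x) = N (K x)" by (simp add: H2_def)
    show "\<forall>x\<in>topspace (nsphere n). H2 (1, x) = N (K (\<lambda>j. 0))" by (simp add: H2_def)
    show "\<forall>t\<in>{0..1}. True" by simp
  qed
  have "contractible_space (nsphere n)"
    unfolding contractible_space_def using homotopic_with_trans[OF h1 h2] by blast
  then show False using non_contractible_space_nsphere by blast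
qed


lemma cont_powertop:
  fixes f :: "(nat \<Rightarrow> real) \<Rightarrow> real"
  assumes "continuous_on UNIV f"
  shows "continuous_map (powertop_real UNIV) euclideanreal f"
  using assms by (simp add: euclidean_product_topology)

lemma pi_lemma:
  fixes B :: "nat set" and A Bv :: "nat set \<Rightarrow> nat \<Rightarrow> real"
  assumes fin: "finite B"
    and wit: "\<And>Q j. Q \<subseteq> B \<Longrightarrow> j \<in> B \<Longrightarrow> (j \<in> Q \<longrightarrow> Bv Q j \<ge> 0) \<and> (j \<notin> Q \<longrightarrow> A Q j \<ge> 0)"
  shows "\<exists>w. (\<forall>Q\<in>Pow B. w Q \<ge> 0) \<and> sum w (Pow B) = 1 \<and>
     (\<forall>j\<in>B. 0 \<le> (\<Sum>Q\<in>Pow B. w Q * Bv Q j) \<and>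
        (0 \<le> (\<Sum>Q\<in>Pow B. w Q * A Q j) \<or> (\<Sum>Q\<in>Pow B. w Q * Bv Q j) = 0))"
proof (cases "B = {}")
  case True
  then show ?thesis by (intro exI[of _ "\<lambda>Q. 1"]) auto
next
  case False
  then obtain n where cn: "card B = Suc n" using fin by (cases "card B") auto
  obtain e where e: "bij_betw e {0..<Suc n} B" using ex_bij_betw_nat_finite[OF fin] cn by metis
  define \<iota> where "\<iota> = the_inv_into {0..<Suc n} e"
  have e1: "e i \<in> B" "\<iota> (e i) = i" if "i \<le> n" for i
    using that e unfolding \<iota>_def by (auto simp: bij_betw_def the_inv_into_f_f)
  have \<iota>1: "\<iota> j \<le> n" "e (\<iota> j) = j" if "j \<in> B" for j
  proof -
    have "j \<in> e ` {0..<Suc n}" using that e by (simp add: bij_betw_def)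
    then obtain i where "i < Suc n" "j = e i" by auto
    then show "\<iota> j \<le> n" "e (\<iota> j) = j" using e1 by auto
  qed
  define lam where "lam t Q = (\<Prod>j\<in>Q. (1 + t (\<iota> j)) / 2) * (\<Prod>j\<in>B-Q. (1 - t (\<iota> j)) / 2)"
    for t :: "nat \<Rightarrow> real" and Q
  define a where "a t j = (\<Sum>Q\<in>Pow B. lam t Q * A Q j)" for t j
  define b where "b t j = (\<Sum>Q\<in>Pow B. lam t Q * Bv Q j)" for t j
  define G where "G t i = min (b t (e i)) (max 0 (- a t (e i)))" for t i
  let ?cube = "\<lambda>t. \<forall>j\<le>n. -1 \<le> t j \<and> t j \<le> 1"
  have lam_nn: "lam t Q \<ge> 0" if "?cube t" "Q \<subseteq> B" for t Q
  proof -
    have "\<forall>j\<in>B. -1 \<le> t (\<iota> j) \<and> t (\<iota> j) \<le> 1" using that \<iota>1 by blast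
    then show ?thesis unfolding lam_def using that
      by (intro mult_nonneg_nonneg prod_nonneg) (force, force)
  qed
  have lam_sum: "sum (lam t) (Pow B) = 1" for t
  proof -
    have "sum (lam t) (Pow B) = (\<Prod>j\<in>B. (1 + t (\<iota> j)) / 2 + (1 - t (\<iota> j)) / 2)"
      unfolding lam_def by (rule prod_add[OF fin, symmetric])
    also have "\<dots> = 1" by (simp add: field_simps)
    finally show ?thesis .
  qed
  have cont: "continuous_map (powertop_real UNIV) euclideanreal (\<lambda>t. G t i)" for i
  proof (rule cont_powertop)
    have cl: "continuous_on UNIV (\<lambda>t::nat\<Rightarrow>real. lam t Q)" for Q
      unfolding lam_def
      by (intro continuous_intros continuous_on_product_coordinates) auto
    show "continuous_on UNIV (\<lambda>t. G t i)"
      unfolding G_def a_def b_def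
      by (intro continuous_intros cl)
  qed
  have lo: "G t i \<le> 0" if "?cube t" "i \<le> n" "t i = -1" for t i
  proof -
    have "0 \<le> a t (e i)" unfolding a_def
    proof (rule sum_nonneg)
      fix Q assume Q: "Q \<in> Pow B"
      show "0 \<le> lam t Q * A Q (e i)"
      proof (cases "e i \<in> Q")
        case True
        have "lam t Q = 0" unfolding lam_def
          using True Q that e1 fin by (auto intro!: prod_zero bexI[of _ "e i"] intro: finite_subset)
        then show ?thesis by simp
      next
        case False
        then show ?thesis using wit[of Q "e i"] Q e1 that lam_nn by auto
      qed
    qed
    then show ?thesis by (simp add: G_def)
  qed
  have hi: "G t i \<ge> 0" if "?cube t" "i \<le> n" "t i = 1" for t i
  proof -
    have "0 \<le> b t (e i)" unfolding b_def
    proof (rule sum_nonneg)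
      fix Q assume Q: "Q \<in> Pow B"
      show "0 \<le> lam t Q * Bv Q (e i)"
      proof (cases "e i \<in> Q")
        case False
        have "lam t Q = 0" unfolding lam_def
          using False Q that e1 fin by (auto intro!: prod_zero bexI[of _ "e i"])
        then show ?thesis by simp
      next
        case True
        then show ?thesis using wit[of Q "e i"] Q e1 that lam_nn by auto
      qed
    qed
    then show ?thesis by (simp add: G_def)
  qed
  obtain t where t: "?cube t" "\<And>i. i \<le> n \<Longrightarrow> G t i = 0"
    using PM_aux[of n G] cont lo hi by blast
  show ?thesis
  proof (intro exI[of _ "lam t"] conjI ballI)
    show "0 \<le> lam t Q" if "Q \<in> Pow B" for Q using lam_nn t that by auto
    show "sum (lam t) (Pow B) = 1" by (rule lam_sum)
    fix j assume j: "j \<in> B"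
    have "G t (\<iota> j) = 0" using t \<iota>1 j by blast
    then have "min (b t j) (max 0 (- a t j)) = 0" using \<iota>1 j by (simp add: G_def)
    then show "0 \<le> (\<Sum>Q\<in>Pow B. lam t Q * Bv Q j)"
      "0 \<le> (\<Sum>Q\<in>Pow B. lam t Q * A Q j) \<or> (\<Sum>Q\<in>Pow B. lam t Q * Bv Q j) = 0"
      unfolding a_def b_def by linarith+
  qed
qed


lemma sum_in_convex_cone:
  assumes "convex_cone C" "finite J" "\<forall>j\<in>J. c j \<ge> (0::real)" "\<forall>j\<in>J. q j \<in> C"
  shows "(\<Sum>j\<in>J. c j *\<^sub>R q j) \<in> C"
  using assms(2-4)
proof (induction J rule: finite_induct)
  case empty
  then show ?case using convex_cone_contains_0[OF assms(1)] by simp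
next
  case (insert x F)
  have "c x *\<^sub>R q x \<in> C" using insert.prems convex_cone_scaleR[OF assms(1)] by blast
  moreover have "(\<Sum>j\<in>F. c j *\<^sub>R q j) \<in> C" using insert.IH insert.prems by blast
  ultimately have "c x *\<^sub>R q x + (\<Sum>j\<in>F. c j *\<^sub>R q j) \<in> C"
    by (rule convex_cone_add[OF assms(1)])
  moreover have "(\<Sum>j\<in>insert x F. c j *\<^sub>R q j) = c x *\<^sub>R q x + (\<Sum>j\<in>F. c j *\<^sub>R q j)"
    by (rule sum.insert[OF insert.hyps])
  ultimately show ?case by simp
qed

lemma farkas:
  fixes q :: "'j \<Rightarrow> 'a::euclidean_space" and v :: 'a
  assumes fin: "finite J"
    and H: "\<And>d. (\<forall>j\<in>J. q j \<bullet> d \<le> 0) \<Longrightarrow> v \<bullet> d \<le> 0"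
  shows "\<exists>c. (\<forall>j\<in>J. c j \<ge> 0) \<and> v = (\<Sum>j\<in>J. c j *\<^sub>R q j)"
proof (rule ccontr)
  assume nv: "\<not> ?thesis"
  define K where "K = {x. \<exists>c. (\<forall>j\<in>J. c j \<ge> 0) \<and> x = (\<Sum>j\<in>J. c j *\<^sub>R q j)}"
  have "K \<subseteq> convex_cone hull (q ` J)"
  proof
    fix x assume "x \<in> K"
    then obtain c where c: "\<forall>j\<in>J. c j \<ge> 0" "x = (\<Sum>j\<in>J. c j *\<^sub>R q j)" unfolding K_def by blast
    have "\<forall>j\<in>J. q j \<in> convex_cone hull (q ` J)" by (simp add: hull_inc)
    from sum_in_convex_cone[OF convex_cone_convex_cone_hull fin c(1) this]
    show "x \<in> convex_cone hull (q ` J)" using c(2) by simp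
  qed
  moreover have "convex_cone hull (q ` J) \<subseteq> K"
  proof (rule hull_minimal)
    show "q ` J \<subseteq> K"
    proof
      fix x assume "x \<in> q ` J"
      then obtain i where i: "i \<in> J" "x = q i" by auto
      have "(\<Sum>j\<in>J. (if j = i then 1 else 0) *\<^sub>R q j) = (\<Sum>j\<in>J. if j = i then q j else 0)"
        by (rule sum.cong) auto
      also have "\<dots> = q i" using fin i by simp
      finally have "(\<Sum>j\<in>J. (if j = i then 1 else 0) *\<^sub>R q j) = q i" .
      then show "x \<in> K" unfolding K_def using i
        by (intro CollectI exI[of _ "\<lambda>j. if j = i then 1 else 0"]) auto
    qed
    show "convex_cone K"
      unfolding convex_cone_iff
    proof (intro conjI ballI allI impI)
      show "0 \<in> K" unfolding K_def by (intro CollectI exI[of _ "\<lambda>j. 0"]) auto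
      fix x y assume "x \<in> K" "y \<in> K"
      then obtain c c' where "\<forall>j\<in>J. c j \<ge> 0" "x = (\<Sum>j\<in>J. c j *\<^sub>R q j)"
        "\<forall>j\<in>J. c' j \<ge> 0" "y = (\<Sum>j\<in>J. c' j *\<^sub>R q j)" unfolding K_def by blast
      then show "x + y \<in> K" unfolding K_def
        by (intro CollectI exI[of _ "\<lambda>j. c j + c' j"]) (auto simp: scaleR_add_left sum.distrib)
    next
      fix x and t :: real assume "x \<in> K" "0 \<le> t"
      then obtain c where "\<forall>j\<in>J. c j \<ge> 0" "x = (\<Sum>j\<in>J. c j *\<^sub>R q j)" unfolding K_def by blast
      then show "t *\<^sub>R x \<in> K" using \<open>0 \<le> t\<close> unfolding K_def
        by (intro CollectI exI[of _ "\<lambda>j. t * c j"]) (auto simp: scaleR_sum_right)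
    qed
  qed
  ultimately have KK: "K = convex_cone hull (q ` J)" by blast
  have "closed K" unfolding KK using fin by (simp add: closed_convex_cone_hull)
  moreover have "convex K" unfolding KK by (rule convex_convex_cone_hull)
  moreover have "v \<notin> K" using nv unfolding K_def by blast
  ultimately obtain a b where ab: "a \<bullet> v < b" "\<forall>x\<in>K. a \<bullet> x > b"
    using separating_hyperplane_closed_point by blast
  have "0 \<in> K" unfolding KK by (rule convex_cone_hull_contains_0)
  then have b0: "b < 0" using ab(2) by fastforce
  have aq: "a \<bullet> q j \<ge> 0" if "j \<in> J" for j
  proof (rule ccontr)
    assume neg: "\<not> a \<bullet> q j \<ge> 0"
    define t where "t = b / (a \<bullet> q j)"
    have t0: "t \<ge> 0" unfolding t_def using neg b0 by (intro divide_nonpos_neg) auto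
    have "q j \<in> K" unfolding KK using that by (simp add: hull_inc)
    then have "t *\<^sub>R q j \<in> K" unfolding KK using t0 by (simp add: convex_cone_hull_mul)
    then have "a \<bullet> (t *\<^sub>R q j) > b" using ab by blast
    moreover have "a \<bullet> (t *\<^sub>R q j) = b" using neg by (simp add: t_def)
    ultimately show False by simp
  qed
  have "v \<bullet> (- a) \<le> 0"
    by (rule H) (use aq in \<open>auto simp: inner_commute\<close>)
  then show False using ab b0 by (simp add: inner_commute)
qed


lemma tnlp_mult:
  fixes gf :: "'a::euclidean_space" and gg gh gG gH :: "nat \<Rightarrow> 'a"
  assumes Ig: "Ig \<subseteq> {..<ng}" and fin: "finite \<alpha>" "finite \<beta>" "finite \<gamma>"
    and S: "S \<subseteq> \<beta>" and dj: "\<alpha> \<inter> \<beta> = {}" "\<gamma> \<inter> \<beta> = {}"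
    and Bst: "\<And>d. (\<forall>i\<in>Ig. gg i \<bullet> d \<le> 0) \<Longrightarrow> (\<forall>i<nh. gh i \<bullet> d = 0) \<Longrightarrow>
       (\<forall>i\<in>\<alpha>\<union>S. gG i \<bullet> d = 0) \<Longrightarrow> (\<forall>i\<in>\<gamma>\<union>(\<beta>-S). gH i \<bullet> d = 0) \<Longrightarrow>
       (\<forall>i\<in>\<beta>-S. gG i \<bullet> d \<ge> 0) \<Longrightarrow> (\<forall>i\<in>S. gH i \<bullet> d \<ge> 0) \<Longrightarrow> gf \<bullet> d \<ge> 0"
  shows "\<exists>lg lh lG lH. 0 = gf + (\<Sum>i<ng. lg i *\<^sub>R gg i) + (\<Sum>i<nh. lh i *\<^sub>R gh i)
            - (\<Sum>i\<in>\<alpha>\<union>\<beta>. lG i *\<^sub>R gG i) - (\<Sum>i\<in>\<gamma>\<union>\<beta>. lH i *\<^sub>R gH i) \<and>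
         (\<forall>i<ng. lg i \<ge> 0 \<and> (i \<notin> Ig \<longrightarrow> lg i = 0)) \<and>
         (\<forall>i\<in>S. lH i \<ge> 0) \<and> (\<forall>i\<in>\<beta>-S. lG i \<ge> 0)"
proof -
  define Jt where "Jt t = (if t = (0::nat) then Ig else if t = 1 \<or> t = 2 then {..<nh}
      else if t = 3 then \<alpha> \<union> S else if t = 4 then \<alpha> \<union> \<beta> else if t = 5 then \<gamma> \<union> (\<beta> - S) else \<gamma> \<union> \<beta>)" for t
  define q where "q x = (case x of (t,i) \<Rightarrow> if t = (0::nat) then gg i else if t = 1 then gh i
      else if t = 2 then - gh i else if t = 3 then gG i else if t = 4 then - gG i
      else if t = 5 then gH i else - gH i)" for x
  define T where "T = {0,1,2,3,4,5,6::nat}"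
  define J where "J = Sigma T Jt"
  have finIg: "finite Ig" using Ig finite_subset by blast
  have finS: "finite S" using S fin finite_subset by blast
  have finJt: "finite (Jt t)" for t using finIg finS fin by (simp add: Jt_def)
  have finJ: "finite J" unfolding J_def T_def using finJt by auto
  have "\<exists>c. (\<forall>j\<in>J. c j \<ge> 0) \<and> - gf = (\<Sum>j\<in>J. c j *\<^sub>R q j)"
  proof (rule farkas[OF finJ])
    fix d assume hd: "\<forall>j\<in>J. q j \<bullet> d \<le> 0"
    have Q: "q (t,i) \<bullet> d \<le> 0" if "t \<in> T" "i \<in> Jt t" for t i
      using hd that unfolding J_def by blast
    have "gf \<bullet> d \<ge> 0"
    proof (rule Bst)
      show "\<forall>i\<in>Ig. gg i \<bullet> d \<le> 0" using Q[of 0] by (simp add: T_def Jt_def q_def)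
      show "\<forall>i<nh. gh i \<bullet> d = 0"
      proof (intro allI impI)
        fix i assume "i < nh"
        then show "gh i \<bullet> d = 0" using Q[of 1 i] Q[of 2 i] by (simp add: T_def Jt_def q_def)
      qed
      show "\<forall>i\<in>\<alpha>\<union>S. gG i \<bullet> d = 0"
      proof
        fix i assume "i \<in> \<alpha> \<union> S"
        then show "gG i \<bullet> d = 0" using Q[of 3 i] Q[of 4 i] S by (auto simp: T_def Jt_def q_def)
      qed
      show "\<forall>i\<in>\<gamma>\<union>(\<beta>-S). gH i \<bullet> d = 0"
      proof
        fix i assume "i \<in> \<gamma> \<union> (\<beta>-S)"
        then show "gH i \<bullet> d = 0" using Q[of 5 i] Q[of 6 i] by (auto simp: T_def Jt_def q_def)
      qed
      show "\<forall>i\<in>\<beta>-S. gG i \<bullet> d \<ge> 0"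
        using Q[of 4] by (auto simp: T_def Jt_def q_def)
      show "\<forall>i\<in>S. gH i \<bullet> d \<ge> 0"
        using Q[of 6] S by (auto simp: T_def Jt_def q_def)
    qed
    then show "- gf \<bullet> d \<le> 0" by simp
  qed
  then obtain c where c: "\<forall>j\<in>J. c j \<ge> 0" "- gf = (\<Sum>j\<in>J. c j *\<^sub>R q j)" by blast
  have c0: "c (t,i) \<ge> 0" if "t \<in> T" "i \<in> Jt t" for t i using c(1) that unfolding J_def by blast
  define s where "s t = (\<Sum>i\<in>Jt t. c (t,i) *\<^sub>R q (t,i))" for t
  have "(\<Sum>j\<in>J. c j *\<^sub>R q j) = (\<Sum>t\<in>T. s t)"
    unfolding J_def s_def using finJt by (subst sum.Sigma) (auto simp: T_def)
  also have "\<dots> = s 0 + s 1 + s 2 + s 3 + s 4 + s 5 + s 6"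
    by (simp add: T_def)
  finally have gfs: "- gf = s 0 + s 1 + s 2 + s 3 + s 4 + s 5 + s 6" using c(2) by simp
  define lg where "lg i = (if i \<in> Ig then c (0,i) else 0)" for i
  define lh where "lh i = c (1,i) - c (2,i)" for i
  define lG where "lG i = c (4,i) - (if i \<in> \<alpha> \<union> S then c (3,i) else 0)" for i
  define lH where "lH i = c (6,i) - (if i \<in> \<gamma> \<union> (\<beta> - S) then c (5,i) else 0)" for i
  have e0: "(\<Sum>i<ng. lg i *\<^sub>R gg i) = s 0"
  proof -
    have "(\<Sum>i<ng. lg i *\<^sub>R gg i) = (\<Sum>i<ng. if i \<in> Ig then c (0,i) *\<^sub>R gg i else 0)"
      by (rule sum.cong) (auto simp: lg_def)
    also have "\<dots> = (\<Sum>i\<in>{..<ng} \<inter> Ig. c (0,i) *\<^sub>R gg i)" by (rule sum.inter_restrict[symmetric]) simp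
    also have "{..<ng} \<inter> Ig = Ig" using Ig by blast
    finally show ?thesis by (simp add: s_def Jt_def q_def)
  qed
  have e1: "(\<Sum>i<nh. lh i *\<^sub>R gh i) = s 1 + s 2"
    by (simp add: s_def Jt_def q_def lh_def scaleR_diff_left sum_subtractf sum_negf)
  have e2: "(\<Sum>i\<in>\<alpha>\<union>\<beta>. lG i *\<^sub>R gG i) = - s 4 - s 3"
  proof -
    have "(\<Sum>i\<in>\<alpha>\<union>\<beta>. lG i *\<^sub>R gG i) = (\<Sum>i\<in>\<alpha>\<union>\<beta>. c (4,i) *\<^sub>R gG i) - (\<Sum>i\<in>\<alpha>\<union>\<beta>. if i \<in> \<alpha> \<union> S then c (3,i) *\<^sub>R gG i else 0)"
    proof -
      have "(\<Sum>i\<in>\<alpha>\<union>\<beta>. lG i *\<^sub>R gG i) = (\<Sum>i\<in>\<alpha>\<union>\<beta>. c (4,i) *\<^sub>R gG i - (if i \<in> \<alpha> \<union> S then c (3,i) *\<^sub>R gG i else 0))"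
        by (rule sum.cong) (auto simp: lG_def scaleR_diff_left)
      then show ?thesis by (simp only: sum_subtractf)
    qed
    also have "(\<Sum>i\<in>\<alpha>\<union>\<beta>. if i \<in> \<alpha> \<union> S then c (3,i) *\<^sub>R gG i else 0) = (\<Sum>i\<in>(\<alpha>\<union>\<beta>) \<inter> (\<alpha> \<union> S). c (3,i) *\<^sub>R gG i)"
      by (rule sum.inter_restrict[symmetric]) (use fin in simp)
    also have "(\<alpha>\<union>\<beta>) \<inter> (\<alpha> \<union> S) = \<alpha> \<union> S" using S by blast
    finally show ?thesis by (simp add: s_def Jt_def q_def sum_negf)
  qed
  have e3: "(\<Sum>i\<in>\<gamma>\<union>\<beta>. lH i *\<^sub>R gH i) = - s 6 - s 5"
  proof -
    have "(\<Sum>i\<in>\<gamma>\<union>\<beta>. lH i *\<^sub>R gH i) = (\<Sum>i\<in>\<gamma>\<union>\<beta>. c (6,i) *\<^sub>R gH i) - (\<Sum>i\<in>\<gamma>\<union>\<beta>. if i \<in> \<gamma> \<union> (\<beta> - S) then c (5,i) *\<^sub>R gH i else 0)"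
    proof -
      have "(\<Sum>i\<in>\<gamma>\<union>\<beta>. lH i *\<^sub>R gH i) = (\<Sum>i\<in>\<gamma>\<union>\<beta>. c (6,i) *\<^sub>R gH i - (if i \<in> \<gamma> \<union> (\<beta> - S) then c (5,i) *\<^sub>R gH i else 0))"
        by (rule sum.cong) (auto simp: lH_def scaleR_diff_left)
      then show ?thesis by (simp only: sum_subtractf)
    qed
    also have "(\<Sum>i\<in>\<gamma>\<union>\<beta>. if i \<in> \<gamma> \<union> (\<beta> - S) then c (5,i) *\<^sub>R gH i else 0) = (\<Sum>i\<in>(\<gamma>\<union>\<beta>) \<inter> (\<gamma> \<union> (\<beta> - S)). c (5,i) *\<^sub>R gH i)"
      by (rule sum.inter_restrict[symmetric]) (use fin in simp)
    also have "(\<gamma>\<union>\<beta>) \<inter> (\<gamma> \<union> (\<beta> - S)) = \<gamma> \<union> (\<beta> - S)" by blast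
    finally show ?thesis by (simp add: s_def Jt_def q_def sum_negf)
  qed
  show ?thesis
  proof (intro exI conjI)
    show "0 = gf + (\<Sum>i<ng. lg i *\<^sub>R gg i) + (\<Sum>i<nh. lh i *\<^sub>R gh i)
            - (\<Sum>i\<in>\<alpha>\<union>\<beta>. lG i *\<^sub>R gG i) - (\<Sum>i\<in>\<gamma>\<union>\<beta>. lH i *\<^sub>R gH i)"
    proof -
      have gf: "gf = - (s 0 + s 1 + s 2 + s 3 + s 4 + s 5 + s 6)" using arg_cong[OF gfs, of uminus] by simp
      show ?thesis unfolding e0 e1 e2 e3 gf by (simp add: algebra_simps)
    qed
    show "\<forall>i<ng. lg i \<ge> 0 \<and> (i \<notin> Ig \<longrightarrow> lg i = 0)"
      using c0[of 0] by (auto simp: lg_def T_def Jt_def)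
    show "\<forall>i\<in>S. lH i \<ge> 0"
      using c0[of 6] S dj by (auto simp: lH_def T_def Jt_def)
    show "\<forall>i\<in>\<beta>-S. lG i \<ge> 0"
      using c0[of 4] dj by (auto simp: lG_def T_def Jt_def)
  qed
qed


lemma comb_sum:
  fixes v :: "nat \<Rightarrow> 'a::real_vector"
  shows "(\<Sum>Q\<in>P. w Q *\<^sub>R (\<Sum>i\<in>I. a Q i *\<^sub>R v i)) = (\<Sum>i\<in>I. (\<Sum>Q\<in>P. w Q * a Q i) *\<^sub>R v i)"
proof -
  have "(\<Sum>Q\<in>P. w Q *\<^sub>R (\<Sum>i\<in>I. a Q i *\<^sub>R v i)) = (\<Sum>Q\<in>P. \<Sum>i\<in>I. (w Q * a Q i) *\<^sub>R v i)"
    by (simp add: scaleR_sum_right)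
  also have "\<dots> = (\<Sum>i\<in>I. \<Sum>Q\<in>P. (w Q * a Q i) *\<^sub>R v i)" by (rule sum.swap)
  also have "\<dots> = (\<Sum>i\<in>I. (\<Sum>Q\<in>P. w Q * a Q i) *\<^sub>R v i)" by (simp add: scaleR_sum_left)
  finally show ?thesis .
qed

lemma comb_eq:
  fixes c :: "'a::real_vector"
  assumes "\<And>Q. Q \<in> P \<Longrightarrow> 0 = c + X1 Q + X2 Q - X3 Q - X4 Q" "sum w P = 1"
  shows "0 = c + (\<Sum>Q\<in>P. w Q *\<^sub>R X1 Q) + (\<Sum>Q\<in>P. w Q *\<^sub>R X2 Q) - (\<Sum>Q\<in>P. w Q *\<^sub>R X3 Q) - (\<Sum>Q\<in>P. w Q *\<^sub>R X4 Q)"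
proof -
  have "0 = (\<Sum>Q\<in>P. w Q *\<^sub>R (c + X1 Q + X2 Q - X3 Q - X4 Q))"
    using assms(1) by (simp add: sum.neutral)
  also have "\<dots> = (\<Sum>Q\<in>P. w Q) *\<^sub>R c + (\<Sum>Q\<in>P. w Q *\<^sub>R X1 Q) + (\<Sum>Q\<in>P. w Q *\<^sub>R X2 Q) - (\<Sum>Q\<in>P. w Q *\<^sub>R X3 Q) - (\<Sum>Q\<in>P. w Q *\<^sub>R X4 Q)"
    by (simp add: scaleR_add_right scaleR_diff_right sum.distrib sum_subtractf scaleR_sum_left)
  finally show ?thesis using assms(2) by simp
qed

theorem corollary2p4:
  fixes f :: "'a::euclidean_space \<Rightarrow> real"
    and g h G H :: "nat \<Rightarrow> 'a \<Rightarrow> real"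
    and ng nh m :: nat and zbar :: 'a
  assumes "\<forall>z. f differentiable (at z)"
    and "\<forall>i<ng. \<forall>z. g i differentiable (at z)"
    and "\<forall>i<nh. \<forall>z. h i differentiable (at z)"
    and "\<forall>i<m. \<forall>z. G i differentiable (at z)"
    and "\<forall>i<m. \<forall>z. H i differentiable (at z)"
    and "zbar \<in> mpcc_feasible g h G H ng nh m"
    and "MPCC_ACQ g h G H ng nh m zbar"
  shows "B_stationary f g h G H ng nh m zbar \<longleftrightarrow> piecewise_M_stationary f g h G H ng nh m zbar"
proof -
  let ?a = "alpha_set G H m zbar"
  let ?b = "beta_set G H m zbar"
  let ?c = "gamma_set G H m zbar"
  let ?I = "I_g g ng zbar"
  let ?L = "mpcc_lin_cone g h G H ng nh m zbar"
  have dj: "?a \<inter> ?b = {}" "?c \<inter> ?b = {}"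
    by (auto simp: alpha_set_def beta_set_def gamma_set_def)
  have fin: "finite ?a" "finite ?b" "finite ?c"
    by (auto simp: alpha_set_def beta_set_def gamma_set_def intro: finite_subset[of _ "{..<m}"])
  have Isub: "?I \<subseteq> {..<ng}" by (auto simp: I_g_def)
  have TL: "tangent_cone (mpcc_feasible g h G H ng nh m) zbar = ?L"
    using assms(7) by (simp add: MPCC_ACQ_def)
  show ?thesis
  proof
    assume B: "B_stationary f g h G H ng nh m zbar"
    have Bl: "grad f zbar \<bullet> d \<ge> 0" if "d \<in> ?L" for d
      using B TL that by (simp add: B_stationary_def)
    show "piecewise_M_stationary f g h G H ng nh m zbar"
      unfolding piecewise_M_stationary_def
    proof (intro allI impI)
      fix \<beta>1 \<beta>2 assume part: "\<beta>1 \<union> \<beta>2 = ?b \<and> \<beta>1 \<inter> \<beta>2 = {}"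
      define R where "R S lg lh lG lH \<longleftrightarrow>
         (0 = grad f zbar + (\<Sum>i<ng. lg i *\<^sub>R grad (g i) zbar) + (\<Sum>i<nh. lh i *\<^sub>R grad (h i) zbar)
            - (\<Sum>i\<in>?a \<union> ?b. lG i *\<^sub>R grad (G i) zbar) - (\<Sum>i\<in>?c \<union> ?b. lH i *\<^sub>R grad (H i) zbar)) \<and>
         (\<forall>i<ng. lg i \<ge> 0 \<and> (i \<notin> ?I \<longrightarrow> lg i = 0)) \<and>
         (\<forall>i\<in>S. lH i \<ge> 0) \<and> (\<forall>i\<in>?b-S. lG i \<ge> 0)"
        for S and lg lh lG lH :: "nat \<Rightarrow> real"
      have ex: "\<exists>lg lh lG lH. R S lg lh lG lH" if S: "S \<subseteq> ?b" for S
        unfolding R_def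
      proof (rule tnlp_mult[OF Isub fin S dj])
        fix d
        assume h1: "\<forall>i\<in>?I. grad (g i) zbar \<bullet> d \<le> 0" and h2: "\<forall>i<nh. grad (h i) zbar \<bullet> d = 0"
          and h3: "\<forall>i\<in>?a \<union> S. grad (G i) zbar \<bullet> d = 0" and h4: "\<forall>i\<in>?c \<union> (?b - S). grad (H i) zbar \<bullet> d = 0"
          and h5: "\<forall>i\<in>?b - S. 0 \<le> grad (G i) zbar \<bullet> d" and h6: "\<forall>i\<in>S. 0 \<le> grad (H i) zbar \<bullet> d"
        show "0 \<le> grad f zbar \<bullet> d"
        proof (rule Bl)
          have "\<forall>i\<in>?b. grad (G i) zbar \<bullet> d \<ge> 0 \<and> grad (H i) zbar \<bullet> d \<ge> 0 \<and>
              (grad (G i) zbar \<bullet> d) * (grad (H i) zbar \<bullet> d) = 0"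
          proof
            fix i assume i: "i \<in> ?b"
            show "grad (G i) zbar \<bullet> d \<ge> 0 \<and> grad (H i) zbar \<bullet> d \<ge> 0 \<and>
              (grad (G i) zbar \<bullet> d) * (grad (H i) zbar \<bullet> d) = 0"
            proof (cases "i \<in> S")
              case True then show ?thesis using h3 h6 by simp
            next
              case False then show ?thesis using h4 h5 i by simp
            qed
          qed
          then show "d \<in> ?L" unfolding mpcc_lin_cone_def using h1 h2 h3 h4 by blast
        qed
      qed
      have "\<forall>S. \<exists>lg lh lG lH. S \<subseteq> ?b \<longrightarrow> R S lg lh lG lH" using ex by blast
      then obtain Lg Lh LG LH where L: "\<And>S. S \<subseteq> ?b \<Longrightarrow> R S (Lg S) (Lh S) (LG S) (LH S)" by metis
      define Sof where "Sof Q = (Q \<inter> \<beta>1) \<union> (\<beta>2 - Q)" for Q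
      have Sof_sub: "Sof Q \<subseteq> ?b" for Q using part by (auto simp: Sof_def)
      define Av where "Av Q j = (if j \<in> \<beta>1 then LG (Sof Q) j else LH (Sof Q) j)" for Q j
      define Bv where "Bv Q j = (if j \<in> \<beta>1 then LH (Sof Q) j else LG (Sof Q) j)" for Q j
      have wit: "(j \<in> Q \<longrightarrow> Bv Q j \<ge> 0) \<and> (j \<notin> Q \<longrightarrow> Av Q j \<ge> 0)" if "Q \<subseteq> ?b" "j \<in> ?b" for Q j
      proof -
        have LS: "\<forall>i\<in>Sof Q. LH (Sof Q) i \<ge> 0" "\<forall>i\<in>?b - Sof Q. LG (Sof Q) i \<ge> 0"
          using L[OF Sof_sub[of Q]] unfolding R_def by blast+
        have jb: "j \<in> \<beta>1 \<or> j \<in> \<beta>2" "\<not> (j \<in> \<beta>1 \<and> j \<in> \<beta>2)" using part that(2) by blast+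
        show ?thesis
        proof (cases "j \<in> \<beta>1")
          case True
          then have nb2: "j \<notin> \<beta>2" using jb by blast
          show ?thesis
          proof (intro conjI impI)
            assume "j \<in> Q"
            then have "j \<in> Sof Q" using True by (simp add: Sof_def)
            then show "Bv Q j \<ge> 0" using LS(1) True by (simp add: Bv_def)
          next
            assume "j \<notin> Q"
            then have "j \<in> ?b - Sof Q" using True nb2 that(2) by (simp add: Sof_def)
            then show "Av Q j \<ge> 0" using LS(2) True by (simp add: Av_def)
          qed
        next
          case False
          then have b2: "j \<in> \<beta>2" using jb by blast
          show ?thesis
          proof (intro conjI impI)
            assume "j \<in> Q"
            then have "j \<in> ?b - Sof Q" using False that(2) by (simp add: Sof_def)
            then show "Bv Q j \<ge> 0" using LS(2) False by (simp add: Bv_def)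
          next
            assume "j \<notin> Q"
            then have "j \<in> Sof Q" using b2 by (simp add: Sof_def)
            then show "Av Q j \<ge> 0" using LS(1) False by (simp add: Av_def)
          qed
        qed
      qed
      obtain w where w: "\<forall>Q\<in>Pow ?b. w Q \<ge> 0" "sum w (Pow ?b) = 1"
        "\<forall>j\<in>?b. 0 \<le> (\<Sum>Q\<in>Pow ?b. w Q * Bv Q j) \<and>
            (0 \<le> (\<Sum>Q\<in>Pow ?b. w Q * Av Q j) \<or> (\<Sum>Q\<in>Pow ?b. w Q * Bv Q j) = 0)"
      proof -
        have "\<exists>w. (\<forall>Q\<in>Pow ?b. w Q \<ge> 0) \<and> sum w (Pow ?b) = 1 \<and>
          (\<forall>j\<in>?b. 0 \<le> (\<Sum>Q\<in>Pow ?b. w Q * Bv Q j) \<and>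
            (0 \<le> (\<Sum>Q\<in>Pow ?b. w Q * Av Q j) \<or> (\<Sum>Q\<in>Pow ?b. w Q * Bv Q j) = 0))"
        proof (rule pi_lemma[of ?b Bv Av, OF fin(2)])
          fix Q j assume "Q \<subseteq> ?b" "j \<in> ?b"
          then show "(j \<in> Q \<longrightarrow> Bv Q j \<ge> 0) \<and> (j \<notin> Q \<longrightarrow> Av Q j \<ge> 0)" by (rule wit)
        qed
        then show ?thesis using that by blast
      qed
      define lg where "lg i = (\<Sum>Q\<in>Pow ?b. w Q * Lg (Sof Q) i)" for i
      define lh where "lh i = (\<Sum>Q\<in>Pow ?b. w Q * Lh (Sof Q) i)" for i
      define lG where "lG i = (\<Sum>Q\<in>Pow ?b. w Q * LG (Sof Q) i)" for i
      define lH where "lH i = (\<Sum>Q\<in>Pow ?b. w Q * LH (Sof Q) i)" for i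
      have RQ: "R (Sof Q) (Lg (Sof Q)) (Lh (Sof Q)) (LG (Sof Q)) (LH (Sof Q))" for Q
        using L[OF Sof_sub[of Q]] .
      have lGB: "lG j = (\<Sum>Q\<in>Pow ?b. w Q * Bv Q j)" "lH j = (\<Sum>Q\<in>Pow ?b. w Q * Av Q j)" if "j \<in> \<beta>2" for j
      proof -
        have "j \<notin> \<beta>1" using that part by blast
        then show "lG j = (\<Sum>Q\<in>Pow ?b. w Q * Bv Q j)" "lH j = (\<Sum>Q\<in>Pow ?b. w Q * Av Q j)"
          unfolding lG_def lH_def Av_def Bv_def by simp_all
      qed
      have lHB: "lH j = (\<Sum>Q\<in>Pow ?b. w Q * Bv Q j)" "lG j = (\<Sum>Q\<in>Pow ?b. w Q * Av Q j)" if "j \<in> \<beta>1" for j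
        using that unfolding lG_def lH_def Av_def Bv_def by simp_all
      show "\<exists>lg lh lG lH.
           0 = grad f zbar + (\<Sum>i<ng. lg i *\<^sub>R grad (g i) zbar) + (\<Sum>i<nh. lh i *\<^sub>R grad (h i) zbar)
               - (\<Sum>i\<in>?a \<union> ?b. lG i *\<^sub>R grad (G i) zbar)
               - (\<Sum>i\<in>?c \<union> ?b. lH i *\<^sub>R grad (H i) zbar) \<and>
           (\<forall>i<ng. lg i \<ge> 0 \<and> lg i * g i zbar = 0) \<and>
           (\<forall>i\<in>\<beta>1. lH i \<ge> 0) \<and> (\<forall>i\<in>\<beta>2. lG i \<ge> 0) \<and>
           (\<forall>i\<in>?b. (lG i \<ge> 0 \<and> lH i \<ge> 0) \<or> lG i * lH i = 0)"
      proof (intro exI conjI)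
        have "0 = grad f zbar
           + (\<Sum>Q\<in>Pow ?b. w Q *\<^sub>R (\<Sum>i<ng. Lg (Sof Q) i *\<^sub>R grad (g i) zbar))
           + (\<Sum>Q\<in>Pow ?b. w Q *\<^sub>R (\<Sum>i<nh. Lh (Sof Q) i *\<^sub>R grad (h i) zbar))
           - (\<Sum>Q\<in>Pow ?b. w Q *\<^sub>R (\<Sum>i\<in>?a \<union> ?b. LG (Sof Q) i *\<^sub>R grad (G i) zbar))
           - (\<Sum>Q\<in>Pow ?b. w Q *\<^sub>R (\<Sum>i\<in>?c \<union> ?b. LH (Sof Q) i *\<^sub>R grad (H i) zbar))"
          by (rule comb_eq[OF _ w(2)]) (use RQ in \<open>simp add: R_def\<close>)
        then show "0 = grad f zbar + (\<Sum>i<ng. lg i *\<^sub>R grad (g i) zbar) + (\<Sum>i<nh. lh i *\<^sub>R grad (h i) zbar)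
               - (\<Sum>i\<in>?a \<union> ?b. lG i *\<^sub>R grad (G i) zbar)
               - (\<Sum>i\<in>?c \<union> ?b. lH i *\<^sub>R grad (H i) zbar)"
          by (simp only: comb_sum lg_def lh_def lG_def lH_def)
        show "\<forall>i<ng. lg i \<ge> 0 \<and> lg i * g i zbar = 0"
        proof (intro allI impI conjI)
          fix i assume i: "i < ng"
          show "lg i \<ge> 0" unfolding lg_def
            using w(1) RQ i by (intro sum_nonneg mult_nonneg_nonneg) (auto simp: R_def)
          show "lg i * g i zbar = 0"
          proof (cases "g i zbar = 0")
            case False
            then have "i \<notin> ?I" by (simp add: I_g_def)
            then have "lg i = 0" unfolding lg_def using RQ i by (simp add: R_def)
            then show ?thesis by simp
          qed simp
        qed
        show "\<forall>i\<in>\<beta>1. lH i \<ge> 0" using w(3) lHB part by auto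
        show "\<forall>i\<in>\<beta>2. lG i \<ge> 0" using w(3) lGB part by auto
        show "\<forall>i\<in>?b. (lG i \<ge> 0 \<and> lH i \<ge> 0) \<or> lG i * lH i = 0"
        proof
          fix i assume i: "i \<in> ?b"
          show "(lG i \<ge> 0 \<and> lH i \<ge> 0) \<or> lG i * lH i = 0"
          proof (cases "i \<in> \<beta>1")
            case True then show ?thesis using w(3) i lHB[OF True] by auto
          next
            case False
            then have "i \<in> \<beta>2" using i part by blast
            then show ?thesis using w(3) i lGB[OF \<open>i \<in> \<beta>2\<close>] by auto
          qed
        qed
      qed
    qed
  next
    assume PM: "piecewise_M_stationary f g h G H ng nh m zbar"
    show "B_stationary f g h G H ng nh m zbar"
      unfolding B_stationary_def TL
    proof
      fix d assume d: "d \<in> ?L"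
      let ?b1 = "{i\<in>?b. grad (G i) zbar \<bullet> d = 0}"
      let ?b2 = "?b - ?b1"
      have part: "?b1 \<union> ?b2 = ?b \<and> ?b1 \<inter> ?b2 = {}" by blast
      obtain lg lh lG lH where E: "0 = grad f zbar + (\<Sum>i<ng. lg i *\<^sub>R grad (g i) zbar) + (\<Sum>i<nh. lh i *\<^sub>R grad (h i) zbar)
               - (\<Sum>i\<in>?a \<union> ?b. lG i *\<^sub>R grad (G i) zbar)
               - (\<Sum>i\<in>?c \<union> ?b. lH i *\<^sub>R grad (H i) zbar)"
        and lg: "\<forall>i<ng. 0 \<le> lg i \<and> lg i * g i zbar = 0"
        and b1: "\<forall>i\<in>?b1. 0 \<le> lH i" and b2: "\<forall>i\<in>?b2. 0 \<le> lG i"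
      proof -
        have ex: "\<exists>lg lh lG lH.
           0 = grad f zbar + (\<Sum>i<ng. lg i *\<^sub>R grad (g i) zbar) + (\<Sum>i<nh. lh i *\<^sub>R grad (h i) zbar)
               - (\<Sum>i\<in>?a \<union> ?b. lG i *\<^sub>R grad (G i) zbar)
               - (\<Sum>i\<in>?c \<union> ?b. lH i *\<^sub>R grad (H i) zbar) \<and>
           (\<forall>i<ng. lg i \<ge> 0 \<and> lg i * g i zbar = 0) \<and>
           (\<forall>i\<in>?b1. lH i \<ge> 0) \<and> (\<forall>i\<in>?b2. lG i \<ge> 0) \<and>
           (\<forall>i\<in>?b. (lG i \<ge> 0 \<and> lH i \<ge> 0) \<or> lG i * lH i = 0)"
          using PM[unfolded piecewise_M_stationary_def, rule_format, OF part] .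
        then show ?thesis using that by blast
      qed
      have dI: "\<forall>i\<in>?I. grad (g i) zbar \<bullet> d \<le> 0" and dh: "\<forall>i<nh. grad (h i) zbar \<bullet> d = 0"
        and da: "\<forall>i\<in>?a. grad (G i) zbar \<bullet> d = 0" and dc: "\<forall>i\<in>?c. grad (H i) zbar \<bullet> d = 0"
        and db: "\<forall>i\<in>?b. grad (G i) zbar \<bullet> d \<ge> 0 \<and> grad (H i) zbar \<bullet> d \<ge> 0 \<and>
              (grad (G i) zbar \<bullet> d) * (grad (H i) zbar \<bullet> d) = 0"
        using d unfolding mpcc_lin_cone_def by blast+
      have "0 = grad f zbar \<bullet> d + (\<Sum>i<ng. lg i * (grad (g i) zbar \<bullet> d)) + (\<Sum>i<nh. lh i * (grad (h i) zbar \<bullet> d))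
               - (\<Sum>i\<in>?a \<union> ?b. lG i * (grad (G i) zbar \<bullet> d))
               - (\<Sum>i\<in>?c \<union> ?b. lH i * (grad (H i) zbar \<bullet> d))"
        using arg_cong[OF E, of "\<lambda>x. x \<bullet> d"] by (simp add: inner_add_left inner_diff_left inner_sum_left)
      moreover have "(\<Sum>i<ng. lg i * (grad (g i) zbar \<bullet> d)) \<le> 0"
      proof (rule sum_nonpos)
        fix i assume i: "i \<in> {..<ng}"
        show "lg i * (grad (g i) zbar \<bullet> d) \<le> 0"
        proof (cases "g i zbar = 0")
          case True
          then have "i \<in> ?I" using i by (simp add: I_g_def)
          then show ?thesis using dI lg i by (simp add: mult_nonneg_nonpos)
        next
          case False
          then have "lg i = 0" using lg i by auto
          then show ?thesis by simp
        qed
      qed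
      moreover have "(\<Sum>i<nh. lh i * (grad (h i) zbar \<bullet> d)) = 0"
        using dh by simp
      moreover have "(\<Sum>i\<in>?a \<union> ?b. lG i * (grad (G i) zbar \<bullet> d)) \<ge> 0"
      proof (rule sum_nonneg)
        fix i assume i: "i \<in> ?a \<union> ?b"
        show "0 \<le> lG i * (grad (G i) zbar \<bullet> d)"
        proof (cases "i \<in> ?b1")
          case True then show ?thesis by simp
        next
          case False
          show ?thesis
          proof (cases "i \<in> ?a")
            case True then show ?thesis using da by simp
          next
            case False
            then have "i \<in> ?b2" using i \<open>i \<notin> ?b1\<close> by blast
            then show ?thesis using b2 db by (simp add: mult_nonneg_nonneg)
          qed
        qed
      qed
      moreover have "(\<Sum>i\<in>?c \<union> ?b. lH i * (grad (H i) zbar \<bullet> d)) \<ge> 0"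
      proof (rule sum_nonneg)
        fix i assume i: "i \<in> ?c \<union> ?b"
        show "0 \<le> lH i * (grad (H i) zbar \<bullet> d)"
        proof (cases "i \<in> ?c")
          case True then show ?thesis using dc by simp
        next
          case False
          then have ib: "i \<in> ?b" using i by blast
          show ?thesis
          proof (cases "i \<in> ?b1")
            case True
            then show ?thesis using b1 db by (simp add: mult_nonneg_nonneg)
          next
            case False
            then have "grad (H i) zbar \<bullet> d = 0" using db ib by auto
            then show ?thesis by simp
          qed
        qed
      qed
      ultimately show "0 \<le> grad f zbar \<bullet> d" by linarith
    qed
  qed
qed
end
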